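(* Consider a single-core non-preemptive server of capacity $f>0$ and tasks $1,\dots,N$, all available at time $0$, task $a$ requiring $\alpha_a$ CPU cycles with deadline $\beta_a$. Let $\mathbf{s}$ be an optimal ordered set without outage and let $\mathbf{s}'=[s'(1),\dots,s'(P)]$ be the ordered set produced by the Optimal Job Scheduling algorithm. If there exists an index $i\in[1,P]$ such that $\alpha_{s(i)}<\alpha_{s'(i)}$ and $\beta_{s(i)}>\beta_{s'(i)}$, and $s(k)=s'(k)$ for all $k\in[1:i-1]$, then $s(i)\in\mathbf{s}'$.
   Context: An ordered set is a sequence of distinct tasks executed back-to-back from time $0$; the task in position $l$ completes at $\frac1f\sum_{k=1}^{l}\alpha_{s(k)}$ and is in outage if this exceeds its deadline. An optimal ordered set is an ordered set with no outage of maximum cardinality. Optimal Job Scheduling algorithm: let $\mathbf{c}=[c(1),\dots,c(N)]$ be the ordering of $[1:N]$ by nondecreasing $\alpha$ (ties broken by nonincreasing $\beta$) and $\mathbf{b}=[b(1),\dots,b(N)]$ the ordering of $[1:N]$ by nondecreasing $\beta$ (ties broken by nondecreasing $\alpha$). Initialize $\mathbf{q}=[q(1),\dots,q(N)]=\mathbf 0$ (entry $0$ denotes an empty slot, with $\alpha_0=0$). For $i=1,\dots,N$: find $i^*$ with $b(i^* )=c(i)$ and set $q(i^* )\gets b(i^* )$; if for some $j\in[i^*:N]$ with $q(j)\neq0$ we have $\sum_{k=1}^{j}\alpha_{q(k)}/f>\beta_{q(j)}$, reset $q(i^* )\gets0$. The output $\mathbf{s}'$ is the sequence of nonzero entries of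 $\mathbf{q}$ in order, of length $P$. *)

theory Defs
  imports Complex_Main
begin

(* Tasks are numbered 1..N; 0 denotes an empty slot. Lists are 0-indexed:
   list position l (0-based) corresponds to position l+1 in the paper. *)

definition ordered_set :: "nat \<Rightarrow> nat list \<Rightarrow> bool" where
  "ordered_set N s \<longleftrightarrow> distinct s \<and> set s \<subseteq> {1..N}"

definition completion :: "(nat \<Rightarrow> real) \<Rightarrow> real \<Rightarrow> nat list \<Rightarrow> nat \<Rightarrow> real" where
  "completion \<alpha> f s l = (\<Sum>k\<le>l. \<alpha> (s ! k)) / f"

definition no_outage :: "(nat \<Rightarrow> real) \<Rightarrow> (nat \<Rightarrow> real) \<Rightarrow> real \<Rightarrow> nat list \<Rightarrow> bool" where
  "no_outage \<alpha> \<beta> f s \<longleftrightarrow> (\<forall>l < length s. completion \<alpha> f s l \<le> \<beta> (s ! l))"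

definition optimal_ordered_set ::
  "nat \<Rightarrow> (nat \<Rightarrow> real) \<Rightarrow> (nat \<Rightarrow> real) \<Rightarrow> real \<Rightarrow> nat list \<Rightarrow> bool" where
  "optimal_ordered_set N \<alpha> \<beta> f s \<longleftrightarrow>
     ordered_set N s \<and> no_outage \<alpha> \<beta> f s \<and>
     (\<forall>t. ordered_set N t \<and> no_outage \<alpha> \<beta> f t \<longrightarrow> length t \<le> length s)"

definition is_c_order :: "nat \<Rightarrow> (nat \<Rightarrow> real) \<Rightarrow> (nat \<Rightarrow> real) \<Rightarrow> nat list \<Rightarrow> bool" where
  "is_c_order N \<alpha> \<beta> c \<longleftrightarrow> length c = N \<and> distinct c \<and> set c = {1..N} \<and>
     (\<forall>i j. i < j \<and> j < N \<longrightarrow>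
        \<alpha> (c ! i) < \<alpha> (c ! j) \<or> (\<alpha> (c ! i) = \<alpha> (c ! j) \<and> \<beta> (c ! i) \<ge> \<beta> (c ! j)))"

definition is_b_order :: "nat \<Rightarrow> (nat \<Rightarrow> real) \<Rightarrow> (nat \<Rightarrow> real) \<Rightarrow> nat list \<Rightarrow> bool" where
  "is_b_order N \<alpha> \<beta> b \<longleftrightarrow> length b = N \<and> distinct b \<and> set b = {1..N} \<and>
     (\<forall>i j. i < j \<and> j < N \<longrightarrow>
        \<beta> (b ! i) < \<beta> (b ! j) \<or> (\<beta> (b ! i) = \<beta> (b ! j) \<and> \<alpha> (b ! i) \<le> \<alpha> (b ! j)))"

definition slot_load :: "(nat \<Rightarrow> real) \<Rightarrow> real \<Rightarrow> nat list \<Rightarrow> nat \<Rightarrow> real" where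
  "slot_load \<alpha> f q j = (\<Sum>k\<le>j. if q ! k = 0 then 0 else \<alpha> (q ! k)) / f"

definition ojs_step ::
  "(nat \<Rightarrow> real) \<Rightarrow> (nat \<Rightarrow> real) \<Rightarrow> real \<Rightarrow> nat list \<Rightarrow> nat list \<Rightarrow> nat \<Rightarrow> nat list" where
  "ojs_step \<alpha> \<beta> f b q x =
     (let istar = (LEAST i. i < length b \<and> b ! i = x);
          q1 = q[istar := b ! istar]
      in if (\<exists>j. istar \<le> j \<and> j < length q1 \<and> q1 ! j \<noteq> 0 \<and>
                  slot_load \<alpha> f q1 j > \<beta> (q1 ! j))
         then q1[istar := 0] else q1)"

definition ojs_output ::
  "nat \<Rightarrow> (nat \<Rightarrow> real) \<Rightarrow> (nat \<Rightarrow> real) \<Rightarrow> real \<Rightarrow> nat list \<Rightarrow> nat list \<Rightarrow> nat list" where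
  "ojs_output N \<alpha> \<beta> f c b =
     filter (\<lambda>x. x \<noteq> 0) (foldl (ojs_step \<alpha> \<beta> f b) (replicate N 0) c)"

end

theory Submission
  imports Defs
begin

definition good :: "nat \<Rightarrow> (nat \<Rightarrow> real) \<Rightarrow> (nat \<Rightarrow> real) \<Rightarrow> real \<Rightarrow> nat list \<Rightarrow> nat list \<Rightarrow> bool" where
  "good N \<alpha> \<beta> f b q \<longleftrightarrow> length q = N \<and> (\<forall>j<N. q!j = 0 \<or> q!j = b!j) \<and>
     (\<forall>j<N. q!j \<noteq> 0 \<longrightarrow> slot_load \<alpha> f q j \<le> \<beta> (q!j))"

lemma sum_zero_tail:
  fixes g :: "nat \<Rightarrow> real"
  assumes "a \<le> j" "\<forall>k. a < k \<and> k \<le> j \<longrightarrow> g k = 0"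
  shows "(\<Sum>k\<le>j. g k) = (\<Sum>k\<le>a. g k)"
  using assms
proof (induction j rule: dec_induct)
  case base
  then show ?case by simp
next
  case (step n)
  then show ?case by (simp add: sum.atMost_Suc)
qed

context
  fixes N :: nat and \<alpha> \<beta> :: "nat \<Rightarrow> real" and f :: real and b :: "nat list"
  assumes bord: "is_b_order N \<alpha> \<beta> b"
begin

lemma pos_props:
  assumes "x \<in> set b"
  shows "(LEAST i. i < length b \<and> b!i = x) < N \<and> b ! (LEAST i. i < length b \<and> b!i = x) = x"
proof -
  from assms obtain p where "p < length b" "b ! p = x" by (auto simp: in_set_conv_nth)
  then have "(LEAST i. i < length b \<and> b!i = x) < length b \<and> b ! (LEAST i. i < length b \<and> b!i = x) = x"
    by (metis (mono_tags, lifting) LeastI)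
  then show ?thesis using bord by (simp add: is_b_order_def)
qed

lemma pos_nth:
  assumes "p < N"
  shows "(LEAST i. i < length b \<and> b!i = b!p) = p"
proof (rule Least_equality)
  show "p < length b \<and> b ! p = b ! p" using assms bord by (simp add: is_b_order_def)
  fix y assume "y < length b \<and> b ! y = b ! p"
  then have "y = p" using assms bord nth_eq_iff_index_eq[of b y p] by (auto simp: is_b_order_def)
  then show "p \<le> y" by simp
qed

lemma step_cases:
  assumes "x \<in> set b" "length q = N" "q ! (LEAST i. i < length b \<and> b!i = x) = 0"
  defines "p \<equiv> (LEAST i. i < length b \<and> b!i = x)"
  shows "(ojs_step \<alpha> \<beta> f b q x = q[p := x] \<and> \<not> (\<exists>j. p \<le> j \<and> j < N \<and> q[p:=x]!j \<noteq> 0 \<and> slot_load \<alpha> f (q[p:=x]) j > \<beta> (q[p:=x]!j)))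
       \<or> (ojs_step \<alpha> \<beta> f b q x = q \<and> (\<exists>j. p \<le> j \<and> j < N \<and> q[p:=x]!j \<noteq> 0 \<and> slot_load \<alpha> f (q[p:=x]) j > \<beta> (q[p:=x]!j)))"
proof -
  have bp: "b ! p = x" "p < N" using pos_props[OF assms(1)] p_def by auto
  have qq: "(q[p := x])[p := 0] = q" using assms(3) unfolding p_def by (metis list_update_id list_update_overwrite)
  show ?thesis
    unfolding ojs_step_def Let_def p_def[symmetric] bp(1) qq
    using assms(2) by auto
qed

lemma step_other:
  assumes "x \<in> set b" "length q = N" "p < N" "b ! p \<noteq> x"
  shows "ojs_step \<alpha> \<beta> f b q x ! p = q ! p"
proof -
  have "(LEAST i. i < length b \<and> b!i = x) \<noteq> p" using pos_props[OF assms(1)] assms(4) by auto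
  then show ?thesis unfolding ojs_step_def Let_def by simp
qed

lemma step_length: "length (ojs_step \<alpha> \<beta> f b q x) = length q"
  unfolding ojs_step_def Let_def by simp

lemma fold_length: "length (foldl (ojs_step \<alpha> \<beta> f b) q cs) = length q"
  by (induction cs arbitrary: q) (auto simp: step_length)

lemma fold_other:
  assumes "set cs \<subseteq> set b" "length q = N" "p < N" "b ! p \<notin> set cs"
  shows "foldl (ojs_step \<alpha> \<beta> f b) q cs ! p = q ! p"
  using assms
proof (induction cs arbitrary: q)
  case Nil
  then show ?case by simp
next
  case (Cons a cs)
  have "foldl (ojs_step \<alpha> \<beta> f b) q (a # cs) ! p = foldl (ojs_step \<alpha> \<beta> f b) (ojs_step \<alpha> \<beta> f b q a) cs ! p"
    by simp
  also have "\<dots> = ojs_step \<alpha> \<beta> f b q a ! p"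
    using Cons by (intro Cons.IH) (auto simp: step_length)
  also have "\<dots> = q ! p" using Cons by (intro step_other) auto
  finally show ?case .
qed

lemma step_good:
  assumes "good N \<alpha> \<beta> f b q" "x \<in> set b" "q ! (LEAST i. i < length b \<and> b!i = x) = 0"
  shows "good N \<alpha> \<beta> f b (ojs_step \<alpha> \<beta> f b q x)"
proof -
  define p where "p = (LEAST i. i < length b \<and> b!i = x)"
  have bp: "b ! p = x" "p < N" using pos_props[OF assms(2)] p_def by auto
  have lq: "length q = N" using assms(1) by (simp add: good_def)
  from step_cases[OF assms(2) lq assms(3)] p_def
  consider "ojs_step \<alpha> \<beta> f b q x = q[p := x]" "\<not> (\<exists>j. p \<le> j \<and> j < N \<and> q[p:=x]!j \<noteq> 0 \<and> slot_load \<alpha> f (q[p:=x]) j > \<beta> (q[p:=x]!j))"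
    | "ojs_step \<alpha> \<beta> f b q x = q" by auto
  then show ?thesis
  proof cases
    case 1
    have "good N \<alpha> \<beta> f b (q[p := x])"
      unfolding good_def
    proof (intro conjI allI impI)
      show "length (q[p := x]) = N" using lq by simp
      fix j assume "j < N"
      then show "q[p := x] ! j = 0 \<or> q[p := x] ! j = b ! j"
        using assms(1) bp lq by (cases "j = p") (auto simp: good_def)
    next
      fix j assume j: "j < N" "q[p := x] ! j \<noteq> 0"
      show "slot_load \<alpha> f (q[p := x]) j \<le> \<beta> (q[p := x] ! j)"
      proof (cases "p \<le> j")
        case True
        then show ?thesis using 1(2) j by force
      next
        case False
        have "slot_load \<alpha> f (q[p := x]) j = slot_load \<alpha> f q j"
          unfolding slot_load_def using False by (intro arg_cong2[where f="(/)"] sum.cong) auto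
        moreover have "q[p := x] ! j = q ! j" using False by simp
        ultimately show ?thesis using assms(1) j by (simp add: good_def)
      qed
    qed
    then show ?thesis using 1 by simp
  next
    case 2
    then show ?thesis using assms(1) by simp
  qed
qed

lemma fold_good:
  assumes "set cs \<subseteq> set b" "distinct cs" "good N \<alpha> \<beta> f b q"
    "\<forall>x\<in>set cs. q ! (LEAST i. i < length b \<and> b!i = x) = 0"
  shows "good N \<alpha> \<beta> f b (foldl (ojs_step \<alpha> \<beta> f b) q cs)"
  using assms
proof (induction cs arbitrary: q)
  case Nil
  then show ?case by simp
next
  case (Cons a cs)
  have g1: "good N \<alpha> \<beta> f b (ojs_step \<alpha> \<beta> f b q a)"
    using Cons.prems by (intro step_good) auto
  have lq: "length q = N" using Cons.prems by (simp add: good_def)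
  have "\<forall>x\<in>set cs. ojs_step \<alpha> \<beta> f b q a ! (LEAST i. i < length b \<and> b!i = x) = 0"
  proof
    fix x assume x: "x \<in> set cs"
    then have xb: "x \<in> set b" using Cons.prems by auto
    have "ojs_step \<alpha> \<beta> f b q a ! (LEAST i. i < length b \<and> b!i = x) = q ! (LEAST i. i < length b \<and> b!i = x)"
      using Cons.prems x pos_props[OF xb] lq by (intro step_other) auto
    then show "ojs_step \<alpha> \<beta> f b q a ! (LEAST i. i < length b \<and> b!i = x) = 0"
      using Cons.prems x by auto
  qed
  then show ?case using Cons g1 by simp
qed

end

theorem lemma2:
  fixes N :: nat and \<alpha> \<beta> :: "nat \<Rightarrow> real" and f :: real
    and c b s :: "nat list" and i :: nat
  assumes "f > 0"
    and "is_c_order N \<alpha> \<beta> c"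
    and "is_b_order N \<alpha> \<beta> b"
    and "optimal_ordered_set N \<alpha> \<beta> f s"
    and "i < length (ojs_output N \<alpha> \<beta> f c b)"
    and "i < length s"
    and "\<alpha> (s ! i) < \<alpha> (ojs_output N \<alpha> \<beta> f c b ! i)"
    and "\<beta> (s ! i) > \<beta> (ojs_output N \<alpha> \<beta> f c b ! i)"
    and "\<forall>k < i. s ! k = ojs_output N \<alpha> \<beta> f c b ! k"
  shows "s ! i \<in> set (ojs_output N \<alpha> \<beta> f c b)"
proof -
  define out where "out = ojs_output N \<alpha> \<beta> f c b"
  define P where "P = (\<lambda>x. LEAST i. i < length b \<and> b ! i = x)"
  define st where "st = ojs_step \<alpha> \<beta> f b"
  have fpos: "f > 0" by fact
  have cN: "length c = N" "distinct c" "set c = {1..N}"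
    and cord: "\<forall>i j. i < j \<and> j < N \<longrightarrow> \<alpha> (c!i) \<le> \<alpha> (c!j)"
    using assms(2) unfolding is_c_order_def by force+
  have bN: "length b = N" "distinct b" "set b = {1..N}"
    and border: "\<forall>i j. i < j \<and> j < N \<longrightarrow> \<beta> (b!i) \<le> \<beta> (b!j)"
    using assms(3) unfolding is_b_order_def by force+
  note bo = assms(3)
  define x where "x = s ! i"
  define y where "y = out ! i"
  have "set s \<subseteq> {1..N}" using assms(4) by (simp add: optimal_ordered_set_def ordered_set_def)
  then have xc: "x \<in> set c" using assms(6) cN unfolding x_def by (auto dest: nth_mem)
  have xb: "x \<in> set b" using xc cN bN by simp
  have x0: "x \<noteq> 0" using xc cN by auto
  have yout: "y \<in> set out" using assms(5) unfolding y_def out_def by simp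
  have axy: "\<alpha> x < \<alpha> y" and bxy: "\<beta> y < \<beta> x" using assms(7,8) unfolding x_def y_def out_def by auto
  obtain c1 c2 where c: "c = c1 @ x # c2" using xc by (meson split_list)
  have dc: "x \<notin> set c1" "x \<notin> set c2" "set c1 \<inter> set c2 = {}" "distinct c1" "distinct c2"
    using cN(2) c by auto
  have c1b: "set c1 \<subseteq> set b" and c2b: "set c2 \<subseteq> set b" using c cN bN by auto
  have ac1: "\<forall>z\<in>set c1. \<alpha> z \<le> \<alpha> x"
  proof
    fix z assume "z \<in> set c1"
    then obtain m where m: "m < length c1" "c1 ! m = z" by (auto simp: in_set_conv_nth)
    have "c ! m = z" "c ! length c1 = x" "length c1 < N" using m c cN(1) by (auto simp: nth_append)
    then show "\<alpha> z \<le> \<alpha> x" using cord m(1) by metis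
  qed
  have ac2: "\<forall>z\<in>set c2. \<alpha> x \<le> \<alpha> z"
  proof
    fix z assume "z \<in> set c2"
    then obtain m where m: "m < length c2" "c2 ! m = z" by (auto simp: in_set_conv_nth)
    have "c ! (length c1 + Suc m) = z" "c ! length c1 = x" "length c1 + Suc m < N"
      using m c cN(1) by (auto simp: nth_append)
    moreover have "length c1 < length c1 + Suc m" by simp
    ultimately show "\<alpha> x \<le> \<alpha> z" using cord by metis
  qed
  define Z where "Z = replicate N (0::nat)"
  define Q where "Q = foldl st Z c1"
  define q1 where "q1 = st Q x"
  define F where "F = foldl st q1 c2"
  have Fc: "F = foldl st Z c" unfolding F_def q1_def Q_def c by simp
  have outF: "out = filter (\<lambda>x. x \<noteq> 0) F" unfolding out_def ojs_output_def Fc Z_def st_def by simp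
  have gZ: "good N \<alpha> \<beta> f b Z" unfolding good_def Z_def by simp
  have Zp: "\<forall>z\<in>set c. Z ! (P z) = 0"
    using pos_props[OF bo] cN bN unfolding Z_def P_def by auto
  have gF: "good N \<alpha> \<beta> f b F" unfolding Fc st_def
    using fold_good[where f=f, OF bo _ cN(2) gZ] Zp cN bN unfolding P_def by auto
  have gQ: "good N \<alpha> \<beta> f b Q" unfolding Q_def st_def
    using fold_good[where f=f, OF bo c1b dc(4) gZ] Zp c unfolding P_def by auto
  have lQ: "length Q = N" and lF: "length F = N" and lZ: "length Z = N"
    using gQ gF by (auto simp: good_def Z_def)
  define px where "px = P x"
  have px: "px < N" "b ! px = x" using pos_props[OF bo xb] unfolding px_def P_def by auto
  have Qpx: "Q ! px = 0"
    unfolding Q_def st_def using fold_other[where f=f, OF bo c1b lZ px(1)] px dc(1) by (simp add: Z_def)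
  have Fpx: "F ! px = q1 ! px"
  proof -
    have "length q1 = N" using lQ step_length[where f=f, OF bo] unfolding q1_def st_def by simp
    then show ?thesis unfolding F_def st_def using fold_other[where f=f, OF bo c2b _ px(1), of q1] px dc(2) by simp
  qed
  show ?thesis
  proof (rule ccontr)
    assume nx: "\<not> ?thesis"
    have Fnx: "F ! px \<noteq> x"
    proof
      assume "F ! px = x"
      then have "x \<in> set F" using px lF by (metis nth_mem)
      then have "x \<in> set out" using x0 outF by simp
      then show False using nx unfolding x_def out_def by simp
    qed
    from step_cases[where f=f, OF bo xb lQ] Qpx px_def P_def
    have "q1 = Q \<and> (\<exists>j. px \<le> j \<and> j < N \<and> Q[px:=x]!j \<noteq> 0 \<and> slot_load \<alpha> f (Q[px:=x]) j > \<beta> (Q[px:=x]!j))"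
      using Fpx Fnx px lQ unfolding q1_def st_def by auto
    then have q1Q: "q1 = Q" and
      "\<exists>j. px \<le> j \<and> j < N \<and> Q[px:=x]!j \<noteq> 0 \<and> slot_load \<alpha> f (Q[px:=x]) j > \<beta> (Q[px:=x]!j)"
      by auto
    then obtain j where j: "px \<le> j" "j < N" "Q[px:=x]!j \<noteq> 0" "slot_load \<alpha> f (Q[px:=x]) j > \<beta> (Q[px:=x]!j)"
      by blast
    have Fpx0: "F ! px = 0" using Fpx q1Q Qpx by simp

    obtain py where py: "py < N" "F ! py = y" using yout lF unfolding outF by (auto simp: in_set_conv_nth)
    have y0: "y \<noteq> 0" using yout unfolding outF by auto
    have Fb: "\<forall>k<N. F ! k \<noteq> 0 \<longrightarrow> F ! k = b ! k" using gF by (auto simp: good_def)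
    have Qb: "\<forall>k<N. Q ! k \<noteq> 0 \<longrightarrow> Q ! k = b ! k" using gQ by (auto simp: good_def)
    have bpy: "b ! py = y" using Fb py y0 by metis
    have yc1: "y \<notin> set c1" using ac1 axy by fastforce
    have Qpy: "Q ! py = 0"
      unfolding Q_def st_def using fold_other[where f=f, OF bo c1b lZ py(1)] bpy yc1 py(1) by (simp add: Z_def)
    have xy: "x \<noteq> y" using axy by auto
    have pypx: "py < px"
    proof (rule ccontr)
      assume "\<not> py < px"
      moreover have "py \<noteq> px" using px bpy xy by auto
      ultimately have "px < py" by simp
      then have "\<beta> x \<le> \<beta> y" using border py px bpy by metis
      then show False using bxy by simp
    qed
    have Fq: "F = foldl st Q (x # c2)" unfolding F_def q1_def by simp
    have xc2b: "set (x # c2) \<subseteq> set b" using xb c2b by simp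
    have inc1: "\<And>k. k < N \<Longrightarrow> b ! k \<in> set c1 \<Longrightarrow> F ! k = Q ! k"
    proof -
      fix k assume k: "k < N" "b ! k \<in> set c1"
      then have "b ! k \<notin> set (x # c2)" using dc by auto
      then show "F ! k = Q ! k" unfolding Fq st_def using fold_other[where f=f, OF bo xc2b lQ k(1)] by simp
    qed
    have Qnz: "\<And>k. k < N \<Longrightarrow> Q ! k \<noteq> 0 \<Longrightarrow> b ! k \<in> set c1"
    proof (rule ccontr)
      fix k assume k: "k < N" "Q ! k \<noteq> 0" "b ! k \<notin> set c1"
      then have "Q ! k = Z ! k" unfolding Q_def st_def using fold_other[where f=f, OF bo c1b lZ k(1)] by (simp add: Z_def)
      then show False using k by (simp add: Z_def)
    qed
    have Qsub: "\<And>k. k < N \<Longrightarrow> Q ! k \<noteq> 0 \<Longrightarrow> F ! k = Q ! k" using Qnz inc1 by blast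
    have Fnew: "\<And>k. k < N \<Longrightarrow> k \<noteq> px \<Longrightarrow> Q ! k = 0 \<Longrightarrow> F ! k \<noteq> 0 \<Longrightarrow> \<alpha> x \<le> \<alpha> (b ! k)"
    proof -
      fix k assume k: "k < N" "k \<noteq> px" "Q ! k = 0" "F ! k \<noteq> 0"
      have "b ! k \<notin> set c1" using inc1 k by fastforce
      moreover have "b ! k \<noteq> x"
      proof
        assume "b ! k = x"
        then have "P (b ! k) = px" unfolding px_def by simp
        moreover have "P (b ! k) = k" unfolding P_def using pos_nth[OF bo k(1)] .
        ultimately show False using k by simp
      qed
      moreover have "b ! k \<in> set c" using k cN bN by (metis nth_mem)
      ultimately have "b ! k \<in> set c2" using c by auto
      then show "\<alpha> x \<le> \<alpha> (b ! k)" using ac2 by blast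
    qed
    define W where "W = (\<lambda>q k. if (q::nat list) ! k = 0 then 0 else \<alpha> (q ! k))"
    have sl: "\<And>q j. slot_load \<alpha> f q j = (\<Sum>k\<le>j. W q k) / f" unfolding slot_load_def W_def by simp
    have key1: "(\<Sum>k\<le>j. W (Q[px:=x]) k) = (\<Sum>k\<le>j. W Q k) + \<alpha> x"
    proof -
      have "\<And>k. k \<le> j \<Longrightarrow> W (Q[px:=x]) k = W Q k + (if k = px then \<alpha> x else 0)"
        using Qpx x0 j lQ unfolding W_def by auto
      then have "(\<Sum>k\<le>j. W (Q[px:=x]) k) = (\<Sum>k\<le>j. W Q k + (if k = px then \<alpha> x else 0))"
        by (intro sum.cong) auto
      also have "\<dots> = (\<Sum>k\<le>j. W Q k) + \<alpha> x" using j(1) by (simp add: sum.distrib)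
      finally show ?thesis .
    qed
    have key2: "\<And>j'. \<alpha> x > 0 \<Longrightarrow> px \<le> j' \<Longrightarrow> j' < N \<Longrightarrow> (\<Sum>k\<le>j'. W F k) \<ge> (\<Sum>k\<le>j'. W Q k) + \<alpha> y"
    proof -
      fix j' assume ax: "\<alpha> x > 0" and j': "px \<le> j'" "j' < N"
      have nn: "\<forall>k\<in>{..j'}. 0 \<le> W F k - W Q k"
      proof
        fix k assume "k \<in> {..j'}"
        then have k: "k < N" using j' by auto
        show "0 \<le> W F k - W Q k"
        proof (cases "Q ! k = 0")
          case False
          then show ?thesis using Qsub k unfolding W_def by simp
        next
          case True
          show ?thesis
          proof (cases "F ! k = 0")
            case True
            then show ?thesis using \<open>Q ! k = 0\<close> unfolding W_def by simp
          next
            case False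
            then have "k \<noteq> px" using Fpx0 by auto
            then have "\<alpha> x \<le> \<alpha> (b ! k)" using Fnew k \<open>Q ! k = 0\<close> False by blast
            then show ?thesis using \<open>Q ! k = 0\<close> False Fb k ax unfolding W_def by simp
          qed
        qed
      qed
      have hpy: "W F py - W Q py = \<alpha> y" using py Qpy y0 unfolding W_def by simp
      have "W F py - W Q py \<le> (\<Sum>k\<le>j'. W F k - W Q k)"
        using member_le_sum[of py "{..j'}" "\<lambda>k. W F k - W Q k"] nn pypx j' by simp
      also have "\<dots> = (\<Sum>k\<le>j'. W F k) - (\<Sum>k\<le>j'. W Q k)" by (simp add: sum_subtractf)
      finally show "(\<Sum>k\<le>j'. W F k) \<ge> (\<Sum>k\<le>j'. W Q k) + \<alpha> y" using hpy by simp
    qed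
    have gFW: "\<And>k. k < N \<Longrightarrow> F ! k \<noteq> 0 \<Longrightarrow> (\<Sum>m\<le>k. W F m) \<le> \<beta> (b ! k) * f"
      using gF Fb fpos unfolding good_def sl by (metis pos_divide_le_eq)
    have gQW: "\<And>k. k < N \<Longrightarrow> Q ! k \<noteq> 0 \<Longrightarrow> (\<Sum>m\<le>k. W Q m) \<le> \<beta> (b ! k) * f"
      using gQ Qb fpos unfolding good_def sl by (metis pos_divide_le_eq)
    have bmono: "\<And>k. k < px \<Longrightarrow> \<beta> (b ! k) * f \<le> \<beta> x * f"
      using border px fpos by (metis mult_right_mono less_imp_le order.strict_trans)
    show False
    proof (cases "px < j")
      case True
      have Qj: "Q ! j \<noteq> 0" "Q[px:=x] ! j = Q ! j" using j True by auto
      have out1: "(\<Sum>k\<le>j. W Q k) + \<alpha> x > \<beta> (b ! j) * f"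
        using j(4) key1 Qj Qb j(2) fpos unfolding sl by (metis pos_less_divide_eq)
      have "(\<Sum>k\<le>j. W Q k) \<le> \<beta> (b ! j) * f" using gQW Qj j by blast
      then have ax: "\<alpha> x > 0" using out1 by linarith
      have "(\<Sum>k\<le>j. W F k) \<le> \<beta> (b ! j) * f" using gFW Qsub Qj j by metis
      then show False using key2[OF ax j(1,2)] out1 axy by linarith
    next
      case False
      then have jpx: "j = px" using j by simp
      have out1: "(\<Sum>k\<le>px. W Q k) + \<alpha> x > \<beta> x * f"
        using j(4) key1 jpx px lQ fpos unfolding sl by (simp add: pos_less_divide_eq)
      show False
      proof (cases "\<alpha> x > 0")
        case True
        define K where "K = {k. k < px \<and> F ! k \<noteq> 0}"
        have Kf: "finite K" "K \<noteq> {}" using pypx py y0 unfolding K_def by auto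
        define k' where "k' = Max K"
        have k': "k' < px" "F ! k' \<noteq> 0" using Max_in[OF Kf] unfolding k'_def K_def by auto
        have zero: "\<forall>k. k' < k \<and> k \<le> px \<longrightarrow> W F k = 0"
        proof (intro allI impI)
          fix k assume k: "k' < k \<and> k \<le> px"
          show "W F k = 0"
          proof (cases "k = px")
            case True then show ?thesis using Fpx0 unfolding W_def by simp
          next
            case False
            then have "k \<notin> K" using k Max_ge[OF Kf(1)] unfolding k'_def by fastforce
            then show ?thesis using k False unfolding K_def W_def by auto
          qed
        qed
        have "(\<Sum>k\<le>px. W F k) = (\<Sum>k\<le>k'. W F k)" using sum_zero_tail[OF _ zero] k' by simp
        also have "\<dots> \<le> \<beta> (b ! k') * f" using gFW k' px by simp
        also have "\<dots> \<le> \<beta> x * f" using bmono k' by simp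
        finally show False using key2[OF True order.refl px(1)] out1 axy by linarith
      next
        case False
        show False
        proof (cases "\<exists>k<px. Q ! k \<noteq> 0")
          case True
          define K where "K = {k. k < px \<and> Q ! k \<noteq> 0}"
          have Kf: "finite K" "K \<noteq> {}" using True unfolding K_def by auto
          define k' where "k' = Max K"
          have k': "k' < px" "Q ! k' \<noteq> 0" using Max_in[OF Kf] unfolding k'_def K_def by auto
          have zero: "\<forall>k. k' < k \<and> k \<le> px \<longrightarrow> W Q k = 0"
          proof (intro allI impI)
            fix k assume k: "k' < k \<and> k \<le> px"
            show "W Q k = 0"
            proof (cases "k = px")
              case True then show ?thesis using Qpx unfolding W_def by simp
            next
              case False
              then have "k \<notin> K" using k Max_ge[OF Kf(1)] unfolding k'_def by fastforce
              then show ?thesis using k False unfolding K_def W_def by auto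
            qed
          qed
          have "(\<Sum>k\<le>px. W Q k) = (\<Sum>k\<le>k'. W Q k)" using sum_zero_tail[OF _ zero] k' by simp
          also have "\<dots> \<le> \<beta> (b ! k') * f" using gQW k' px by simp
          also have "\<dots> \<le> \<beta> x * f" using bmono k' by simp
          finally show False using out1 False by linarith
        next
          case noQ: False
          have "(\<Sum>k\<le>px. W Q k) = 0"
            using noQ Qpx unfolding W_def by (intro sum.neutral) (auto simp: le_less)
          then have ox: "\<alpha> x > \<beta> x * f" using out1 by simp
          define k1 where "k1 = (LEAST k. F ! k \<noteq> 0)"
          have k1: "F ! k1 \<noteq> 0" "k1 \<le> py" using LeastI[of "\<lambda>k. F ! k \<noteq> 0" py] Least_le[of "\<lambda>k. F ! k \<noteq> 0" py]
            py y0 unfolding k1_def by auto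
          have k1N: "k1 < N" "k1 < px" using k1 py pypx by auto
          have "(\<Sum>m\<le>k1. W F m) = W F k1"
          proof -
            have "(\<Sum>m\<le>k1. W F m) = (\<Sum>m\<in>{k1}. W F m)"
            proof (intro sum.mono_neutral_right)
              show "\<forall>m\<in>{..k1} - {k1}. W F m = 0"
              proof
                fix m assume "m \<in> {..k1} - {k1}"
                then have "m < k1" by auto
                then have "F ! m = 0" unfolding k1_def using not_less_Least[of m "\<lambda>k. F ! k \<noteq> 0"] by blast
                then show "W F m = 0" unfolding W_def by simp
              qed
            qed auto
            then show ?thesis by simp
          qed
          then have "\<alpha> (b ! k1) \<le> \<beta> (b ! k1) * f" using gFW[OF k1N(1) k1(1)] k1 Fb k1N unfolding W_def by simp
          moreover have "\<alpha> x \<le> \<alpha> (b ! k1)" using Fnew[OF k1N(1) _ _ k1(1)] k1N noQ by auto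
          moreover have "\<beta> (b ! k1) * f \<le> \<beta> x * f" using bmono k1N by simp
          ultimately show False using ox by linarith
        qed
      qed
    qed
  qed
qed

end
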